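(* Let $G$ be a closed subgroup of $S_\infty$. Then there is a good quantifier $Q_G$ of type $\langle 2\rangle$ on $\mathbb{N}$ with $\mathrm{Aut}(Q_G)=G$.
   Context: $S_\infty$ is the group of permutations of $\mathbb{N}$ with the topology of pointwise convergence. A quantifier of type $\langle k\rangle$ on $\mathbb{N}$ is a set $Q\subseteq 2^{\mathbb{N}^k}$ (a family of subsets of $\mathbb{N}^k$; $2^{\mathbb{N}^k}$ carries the product topology). $Q$ is downwards closed if it is closed under subsets. For a map $p$ and $A\subseteq\mathbb{N}^k$, $p(A)=\{(p(a_1),\dots,p(a_k)):(a_1,\dots,a_k)\in A\}$. For $Q$ closed and downwards closed, a function $p:n\to\mathbb{N}$ is compatible with $Q$ if for every $A\subseteq n^k$, $A\in Q\iff p(A)\in Q$. A permutation $f$ of $\mathbb{N}$ fixes $Q$ if $A\in Q\iff f(A)\in Q$ for all $A\subseteq\mathbb{N}^k$; $\mathrm{Aut}(Q)$ is the group of such permutations. $Q$ is good if it is closed, downwards closed, and every finite injection $p:n\to\mathbb{N}$ compatible with $Q$ extends to a permutation of $\mathbb{N}$ fixing $Q$. *)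

theory Defs
  imports Main
begin

text \<open>Elements of S_infinity are represented as bijections nat => nat.
  A quantifier of type <2> on nat is a set of subsets of nat x nat.\<close>

definition pmap2 :: "(nat \<Rightarrow> nat) \<Rightarrow> (nat \<times> nat) set \<Rightarrow> (nat \<times> nat) set" where
  "pmap2 p A = (\<lambda>(a, b). (p a, p b)) ` A"

text \<open>Closed subgroup of S_infinity (topology of pointwise convergence):
  a set of permutations containing the identity, closed under composition and inverses,
  and containing every permutation each of whose finite restrictions to {0..<n}
  agrees with some element of G.\<close>
definition closed_subgroup_Sinf :: "(nat \<Rightarrow> nat) set \<Rightarrow> bool" where
  "closed_subgroup_Sinf G \<longleftrightarrow>
     (\<forall>f\<in>G. bij f) \<and> id \<in> G \<and>
     (\<forall>f\<in>G. \<forall>g\<in>G. f \<circ> g \<in> G) \<and>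
     (\<forall>f\<in>G. inv f \<in> G) \<and>
     (\<forall>f. bij f \<and> (\<forall>n. \<exists>g\<in>G. \<forall>i<n. g i = f i) \<longrightarrow> f \<in> G)"

text \<open>Closedness of Q in the product topology on 2^(nat x nat): A is in Q whenever every basic
  open neighbourhood of A (determined by a finite set F of coordinates) meets Q.\<close>
definition closed_quant2 :: "(nat \<times> nat) set set \<Rightarrow> bool" where
  "closed_quant2 Q \<longleftrightarrow>
     (\<forall>A. (\<forall>F. finite F \<longrightarrow> (\<exists>B\<in>Q. B \<inter> F = A \<inter> F)) \<longrightarrow> A \<in> Q)"

definition downward_closed2 :: "(nat \<times> nat) set set \<Rightarrow> bool" where
  "downward_closed2 Q \<longleftrightarrow> (\<forall>A\<in>Q. \<forall>B. B \<subseteq> A \<longrightarrow> B \<in> Q)"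

text \<open>p : n -> nat (only values on {0..<n} matter) is compatible with Q.\<close>
definition compatible2 :: "nat \<Rightarrow> (nat \<Rightarrow> nat) \<Rightarrow> (nat \<times> nat) set set \<Rightarrow> bool" where
  "compatible2 n p Q \<longleftrightarrow>
     (\<forall>A. A \<subseteq> {0..<n} \<times> {0..<n} \<longrightarrow> (A \<in> Q \<longleftrightarrow> pmap2 p A \<in> Q))"

definition fixes_quant2 :: "(nat \<Rightarrow> nat) \<Rightarrow> (nat \<times> nat) set set \<Rightarrow> bool" where
  "fixes_quant2 f Q \<longleftrightarrow> (\<forall>A. A \<in> Q \<longleftrightarrow> pmap2 f A \<in> Q)"

definition Aut2 :: "(nat \<times> nat) set set \<Rightarrow> (nat \<Rightarrow> nat) set" where
  "Aut2 Q = {f. bij f \<and> fixes_quant2 f Q}"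

definition good2 :: "(nat \<times> nat) set set \<Rightarrow> bool" where
  "good2 Q \<longleftrightarrow> closed_quant2 Q \<and> downward_closed2 Q \<and>
     (\<forall>n p. inj_on p {0..<n} \<and> compatible2 n p Q \<longrightarrow>
        (\<exists>f. bij f \<and> (\<forall>i<n. f i = p i) \<and> fixes_quant2 f Q))"

end

theory Submission
  imports Defs
begin

definition S0 :: "(nat \<times> nat) set" where
  "S0 = {(0,0)} \<union> range (\<lambda>i. (i, Suc i))"

definition E0 :: "nat \<Rightarrow> (nat \<times> nat) set" where
  "E0 n = {(0,0)} \<union> (\<lambda>i. (i, Suc i)) ` {i. Suc i < n}"

definition QG :: "(nat \<Rightarrow> nat) set \<Rightarrow> (nat \<times> nat) set set" where
  "QG G = {A. \<forall>F. finite F \<longrightarrow> (\<exists>g\<in>G. A \<inter> F \<subseteq> pmap2 g S0)}"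

lemma pmap2_comp: "pmap2 f (pmap2 g A) = pmap2 (f \<circ> g) A"
  unfolding pmap2_def by (force simp: image_image)

lemma pmap2_id: "pmap2 id A = A"
  unfolding pmap2_def by auto

lemma pmap2_mono: "A \<subseteq> B \<Longrightarrow> pmap2 f A \<subseteq> pmap2 f B"
  unfolding pmap2_def by auto

lemma pin:
  assumes g: "inj g" and p: "inj_on p {0..<n}" and n: "0 < n"
    and sub: "pmap2 p (E0 n) \<subseteq> pmap2 g S0"
  shows "\<forall>i<n. g i = p i"
proof -
  have mem: "\<And>x y. (x, y) \<in> E0 n \<Longrightarrow> \<exists>a b. (a, b) \<in> S0 \<and> p x = g a \<and> p y = g b"
    using sub unfolding pmap2_def by force
  have "g i = p i" if "i < n" for i
    using that
  proof (induction i)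
    case 0
    have "(0,0) \<in> E0 n" by (simp add: E0_def)
    then obtain a b where ab: "(a,b) \<in> S0" "p 0 = g a" "p 0 = g b" using mem by blast
    then have "a = b" using g by (metis injD)
    with ab(1) have "a = 0" by (auto simp: S0_def)
    then show ?case using ab by simp
  next
    case (Suc i)
    have "(i, Suc i) \<in> E0 n" using Suc.prems by (auto simp: E0_def)
    then obtain a b where ab: "(a,b) \<in> S0" "p i = g a" "p (Suc i) = g b" using mem by blast
    have gi: "g i = p i" using Suc by simp
    then have "a = i" using ab g by (metis injD)
    show ?case
    proof (cases "(a,b) = (0,0)")
      case True
      then have "p (Suc i) = p 0" using ab \<open>a = i\<close> by simp
      moreover have "Suc i \<in> {0..<n}" "0 \<in> {0..<n}" using Suc.prems by auto
      ultimately have "Suc i = 0" by (rule inj_onD[OF p])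
      then show ?thesis by simp
    next
      case False
      then have "b = Suc a" using ab(1) by (auto simp: S0_def)
      then show ?thesis using ab \<open>a = i\<close> by simp
    qed
  qed
  then show ?thesis by blast
qed

theorem proposition13:
  fixes G :: "(nat \<Rightarrow> nat) set"
  assumes "closed_subgroup_Sinf G"
  shows "\<exists>Q :: (nat \<times> nat) set set. good2 Q \<and> Aut2 Q = G"
proof -
  have bijG: "\<And>f. f \<in> G \<Longrightarrow> bij f" and idG: "id \<in> G"
    and compG: "\<And>f g. f \<in> G \<Longrightarrow> g \<in> G \<Longrightarrow> f \<circ> g \<in> G"
    and invG: "\<And>f. f \<in> G \<Longrightarrow> inv f \<in> G"
    and clG: "\<And>f. bij f \<Longrightarrow> (\<forall>n. \<exists>g\<in>G. \<forall>i<n. g i = f i) \<Longrightarrow> f \<in> G"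
    using assms unfolding closed_subgroup_Sinf_def by blast+
  define Q where "Q = QG G"
  have inv1: "pmap2 h A \<in> Q" if h: "h \<in> G" and A: "A \<in> Q" for h A
  proof -
    have "\<exists>g\<in>G. pmap2 h A \<inter> F \<subseteq> pmap2 g S0" if F: "finite F" for F
    proof -
      let ?m = "\<lambda>(a::nat, b::nat). (h a, h b)"
      have injm: "inj ?m" using bijG[OF h] unfolding bij_def inj_def by auto
      define F' where "F' = ?m -` F"
      have "finite F'" unfolding F'_def using F injm by (simp add: finite_vimageI)
      then obtain g where g: "g \<in> G" "A \<inter> F' \<subseteq> pmap2 g S0"
        using A unfolding Q_def QG_def by blast
      have "pmap2 h A \<inter> F \<subseteq> pmap2 h (A \<inter> F')"
        unfolding pmap2_def F'_def by auto
      also have "\<dots> \<subseteq> pmap2 h (pmap2 g S0)" using g(2) by (rule pmap2_mono)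
      also have "\<dots> = pmap2 (h \<circ> g) S0" by (rule pmap2_comp)
      finally show ?thesis using compG[OF h g(1)] by blast
    qed
    then show ?thesis unfolding Q_def QG_def by blast
  qed
  have fixG: "fixes_quant2 h Q" if h: "h \<in> G" for h
    unfolding fixes_quant2_def
  proof
    fix A
    show "A \<in> Q \<longleftrightarrow> pmap2 h A \<in> Q"
    proof
      assume "A \<in> Q" then show "pmap2 h A \<in> Q" using inv1 h by blast
    next
      assume "pmap2 h A \<in> Q"
      then have "pmap2 (inv h) (pmap2 h A) \<in> Q" using inv1 invG h by blast
      moreover have "inv h \<circ> h = id" using bijG[OF h] by (simp add: bij_is_inj)
      ultimately show "A \<in> Q" by (simp add: pmap2_comp pmap2_id)
    qed
  qed
  have ext: "\<exists>g\<in>G. \<forall>i<n. g i = p i" if p: "inj_on p {0..<n}" and c: "compatible2 n p Q" for n p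
  proof (cases "n = 0")
    case True then show ?thesis using idG by auto
  next
    case False
    have Esub: "E0 n \<subseteq> {0..<n} \<times> {0..<n}" using False by (auto simp: E0_def)
    have fin: "finite (E0 n)" using Esub finite_subset by blast
    have "E0 n \<subseteq> S0" by (auto simp: E0_def S0_def)
    then have "E0 n \<inter> F \<subseteq> pmap2 id S0" for F by (auto simp: pmap2_id)
    then have "E0 n \<in> Q" unfolding Q_def QG_def using idG by blast
    then have "pmap2 p (E0 n) \<in> Q" using c Esub unfolding compatible2_def by blast
    moreover have "finite (pmap2 p (E0 n))" unfolding pmap2_def using fin by simp
    ultimately obtain g where g: "g \<in> G" "pmap2 p (E0 n) \<inter> pmap2 p (E0 n) \<subseteq> pmap2 g S0"
      unfolding Q_def QG_def by blast
    have "\<forall>i<n. g i = p i"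
      by (rule pin[OF bij_is_inj[OF bijG[OF g(1)]] p]) (use False g(2) in auto)
    then show ?thesis using g(1) by blast
  qed
  have closed: "closed_quant2 Q"
    unfolding closed_quant2_def
  proof (intro allI impI)
    fix A assume H: "\<forall>F. finite F \<longrightarrow> (\<exists>B\<in>Q. B \<inter> F = A \<inter> F)"
    have "\<exists>g\<in>G. A \<inter> F \<subseteq> pmap2 g S0" if "finite F" for F
    proof -
      have "\<exists>B\<in>Q. B \<inter> F = A \<inter> F" using H that by simp
      then obtain B where B: "B \<in> Q" "B \<inter> F = A \<inter> F" by (elim bexE)
      from B(1) that obtain g where g: "g \<in> G" "B \<inter> F \<subseteq> pmap2 g S0"
        unfolding Q_def QG_def by blast
      have "A \<inter> F \<subseteq> pmap2 g S0" using g(2) B(2) by simp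
      then show ?thesis using g(1) by blast
    qed
    then show "A \<in> Q" unfolding Q_def QG_def by blast
  qed
  have down: "downward_closed2 Q"
    unfolding downward_closed2_def Q_def QG_def
  proof (intro ballI allI impI)
    fix A B F assume "A \<in> {A. \<forall>F. finite F \<longrightarrow> (\<exists>g\<in>G. A \<inter> F \<subseteq> pmap2 g S0)}" "B \<subseteq> A"
    have "\<exists>g\<in>G. B \<inter> F \<subseteq> pmap2 g S0" if "finite F" for F
    proof -
      from that \<open>A \<in> _\<close> obtain g where g: "g \<in> G" "A \<inter> F \<subseteq> pmap2 g S0" by blast
      have "B \<inter> F \<subseteq> A \<inter> F" using \<open>B \<subseteq> A\<close> by blast
      with g show ?thesis by blast
    qed
    then show "B \<in> {A. \<forall>F. finite F \<longrightarrow> (\<exists>g\<in>G. A \<inter> F \<subseteq> pmap2 g S0)}" by blast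
  qed
  have good: "good2 Q"
    unfolding good2_def
  proof (intro conjI closed down allI impI)
    fix n p assume "inj_on p {0..<n} \<and> compatible2 n p Q"
    then obtain g where "g \<in> G" "\<forall>i<n. g i = p i" using ext by blast
    then show "\<exists>f. bij f \<and> (\<forall>i<n. f i = p i) \<and> fixes_quant2 f Q"
      using bijG[of g] fixG[of g] by blast
  qed
  have "Aut2 Q = G"
  proof
    show "G \<subseteq> Aut2 Q" unfolding Aut2_def using bijG fixG by blast
  next
    show "Aut2 Q \<subseteq> G"
    proof
      fix f assume "f \<in> Aut2 Q"
      then have bf: "bij f" and ff: "fixes_quant2 f Q" unfolding Aut2_def by auto
      have "\<exists>g\<in>G. \<forall>i<n. g i = f i" for n
      proof (rule ext)
        show "inj_on f {0..<n}" using bf bij_is_inj inj_on_subset by blast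
        show "compatible2 n f Q" using ff unfolding compatible2_def fixes_quant2_def by blast
      qed
      then show "f \<in> G" using clG bf by blast
    qed
  qed
  with good show ?thesis by blast
qed

end
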